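(* Let $\Gamma$ be a smooth simple closed curve in $\mathbb R^2$ with arclength parameter $\theta\in[0,\ell)$ and curvature $\kappa(\theta)$, let $M_0>0$ be such that Fermi coordinates $\mathbf y=\gamma(\theta)+t\nu(\theta)$, $|t|<M_0$, are valid, and let $u$ be a (classical) solution of $-\epsilon^2\Delta u+[1+\epsilon^2W(\mathbf y)]u-|u|^2u=0$ in $\mathbb R^2$, written $u=u(t,\theta)$, $W=W(t,\theta)$ in these coordinates. Then for every constant $0<M<M_0$ and every $\theta$, with $\kappa=\kappa(\theta)$: $$\epsilon^2\!\int_{-M}^{M}\!(1+\kappa t)u_t^2\,\mathrm dt+\!\int_{-M}^{M}\!(1+\kappa t)[1+\epsilon^2W]u^2\,\mathrm dt-\!\int_{-M}^{M}\!(1+\kappa t)u^4\,\mathrm dt=\epsilon^2\!\int_{-M}^{M}\!u\,\partial_\theta\Big[\tfrac{\partial_\theta u}{1+\kappa t}\Big]\mathrm dt+\epsilon^2(1+\kappa t)uu_t\Big|_{t=-M}^{M},$$ $$\epsilon^2\!\int_{-M}^{M}\!(1+\kappa t)^2W_tu^2\,\mathrm dt+2\kappa\!\int_{-M}^{M}\!(1+\kappa t)[1+\epsilon^2W]u^2\,\mathrm dt-\kappa\!\int_{-M}^{M}\!(1+\kappa t)u^4\,\mathrm dt$$ $$=-2\epsilon^2\!\int_{-M}^{M}\!(1+\kappa t)u_t\,\partial_\theta\Big[\tfrac{\partial_\theta u}{1+\kappa t}\Big]\mathrm dt-\epsilon^2\big[(1+\kappa t)u_t\big]^2\Big|_{-M}^{M}+(1+\kappa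 t)^2[1+\epsilon^2W]u^2\Big|_{-M}^{M}-\tfrac12(1+\kappa t)^2|u|^4\Big|_{-M}^{M},$$ and consequently $$2\epsilon^2\kappa\!\int_{-M}^{M}\!(1+\kappa t)u_t^2\,\mathrm dt-\epsilon^2\!\int_{-M}^{M}\!(1+\kappa t)^2W_tu^2\,\mathrm dt-\kappa\!\int_{-M}^{M}\!(1+\kappa t)u^4\,\mathrm dt$$ $$=2\epsilon^2\!\int_{-M}^{M}\!\partial_t\big[(1+\kappa t)u\big]\,\partial_\theta\Big[\tfrac{\partial_\theta u}{1+\kappa t}\Big]\mathrm dt+2\epsilon^2\kappa(1+\kappa t)uu_t\Big|_{-M}^{M}+\epsilon^2\big[(1+\kappa t)u_t\big]^2\Big|_{-M}^{M}-(1+\kappa t)^2[1+\epsilon^2W]u^2\Big|_{-M}^{M}+\tfrac12(1+\kappa t)^2|u|^4\Big|_{-M}^{M}.$$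
   Context: $\nu$ is the unit outer normal to $\Gamma$. In Fermi coordinates the Laplacian is $\Delta=\frac{1}{1+\kappa t}\partial_t\big[(1+\kappa t)\partial_t\big]+\frac{1}{1+\kappa t}\partial_\theta\big[\frac{1}{1+\kappa t}\partial_\theta\big]$. *)

theory Defs
  imports "HOL-Analysis.Analysis"
begin

definition smooth_curve :: "(real \<Rightarrow> real^2) \<Rightarrow> bool" where
  "smooth_curve g \<longleftrightarrow> (\<exists>D. D 0 = g \<and>
      (\<forall>n x. (D n has_vector_derivative D (Suc n) x) (at x)))"

definition pderiv2 :: "real^2 \<Rightarrow> (real^2 \<Rightarrow> real) \<Rightarrow> real^2 \<Rightarrow> real" where
  "pderiv2 i f y = deriv (\<lambda>s. f (y + s *\<^sub>R i)) 0"

definition C1_R2 :: "(real^2 \<Rightarrow> real) \<Rightarrow> bool" where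
  "C1_R2 f \<longleftrightarrow> (\<forall>y. f differentiable (at y)) \<and>
      (\<forall>i\<in>Basis. continuous_on UNIV (pderiv2 i f))"

definition C2_R2 :: "(real^2 \<Rightarrow> real) \<Rightarrow> bool" where
  "C2_R2 f \<longleftrightarrow> C1_R2 f \<and> (\<forall>i\<in>Basis. C1_R2 (pderiv2 i f))"

definition laplacian2 :: "(real^2 \<Rightarrow> real) \<Rightarrow> real^2 \<Rightarrow> real" where
  "laplacian2 f y = (\<Sum>i\<in>Basis. pderiv2 i (pderiv2 i f) y)"

definition fermi :: "(real \<Rightarrow> real^2) \<Rightarrow> (real \<Rightarrow> real^2) \<Rightarrow> (real^2 \<Rightarrow> 'a) \<Rightarrow> real \<Rightarrow> real \<Rightarrow> 'a" where
  "fermi g nu f t \<theta> = f (g \<theta> + t *\<^sub>R nu \<theta>)"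

definition evalb :: "(real \<Rightarrow> real) \<Rightarrow> real \<Rightarrow> real \<Rightarrow> real" where
  "evalb f a b = f b - f a"

end

theory Submission
  imports Defs
begin

definition rot :: "real^2 \<Rightarrow> real^2" where
  "rot v = (\<chi> i. if i = 1 then - (v$2) else v$1)"

lemma rot_1[simp]: "rot v $ 1 = - (v$2)" and rot_2[simp]: "rot v $ 2 = v$1"
  by (simp_all add: rot_def)

lemma rot_scale: "rot (c *\<^sub>R v) = c *\<^sub>R rot v"
  by (simp add: vec_eq_iff forall_2)

lemma rot_rot: "rot (rot v) = - v"
  by (simp add: vec_eq_iff forall_2)

lemma bl_rot: "bounded_linear rot"
proof -
  have "linear rot" by (rule linearI) (simp_all add: vec_eq_iff forall_2)
  thus ?thesis by (simp add: linear_conv_bounded_linear)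
qed

lemma Basis_vec2: "(Basis :: (real^2) set) = {axis 1 1, axis 2 1}"
  by (auto simp: Basis_vec_def UNIV_2)

lemma axis12_ne: "(axis 1 1 :: real^2) \<noteq> axis 2 1"
  by (simp add: axis_eq_axis)

lemma laplacian2_eq: "laplacian2 f y = pderiv2 (axis 1 1) (pderiv2 (axis 1 1) f) y + pderiv2 (axis 2 1) (pderiv2 (axis 2 1) f) y"
  unfolding laplacian2_def Basis_vec2 using axis12_ne by simp

lemma vec2_decomp: "(v::real^2) = v$1 *\<^sub>R axis 1 1 + v$2 *\<^sub>R axis 2 1"
  by (simp add: vec_eq_iff forall_2 axis_def)

lemma pderiv2_frechet:
  assumes "(f has_derivative f') (at y)"
  shows "pderiv2 e f y = f' e"
proof -
  have l: "linear f'" using assms by (rule has_derivative_linear)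
  have "((\<lambda>s. y + s *\<^sub>R e) has_derivative (\<lambda>h. h *\<^sub>R e)) (at 0)"
    by (auto intro!: derivative_eq_intros)
  moreover have "(f has_derivative f') (at (y + 0 *\<^sub>R e))" using assms by simp
  ultimately have "((\<lambda>s. f (y + s *\<^sub>R e)) has_derivative (\<lambda>h. f' (h *\<^sub>R e))) (at 0)"
    using has_derivative_compose[of "\<lambda>s. y + s *\<^sub>R e"] by (metis (no_types) comp_def)
  moreover have "(\<lambda>h. f' (h *\<^sub>R e)) = (\<lambda>h. f' e * h)"
    using linear_scale[OF l] by (auto simp: mult.commute)
  ultimately have "((\<lambda>s. f (y + s *\<^sub>R e)) has_real_derivative f' e) (at 0)"
    unfolding has_field_derivative_def by simp
  thus ?thesis unfolding pderiv2_def by (rule DERIV_imp_deriv)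
qed

lemma pd_chain:
  fixes f :: "real^2 \<Rightarrow> real"
  assumes "f differentiable (at (c x))" "(c has_vector_derivative v) (at x)"
  shows "((\<lambda>s. f (c s)) has_real_derivative
           (v$1 * pderiv2 (axis 1 1) f (c x) + v$2 * pderiv2 (axis 2 1) f (c x))) (at x)"
proof -
  obtain f' where fd: "(f has_derivative f') (at (c x))"
    using assms(1) unfolding differentiable_def by blast
  have l: "linear f'" using fd by (rule has_derivative_linear)
  have cd: "(c has_derivative (\<lambda>h. h *\<^sub>R v)) (at x)"
    using assms(2) by (simp add: has_vector_derivative_def)
  have "((\<lambda>s. f (c s)) has_derivative (\<lambda>h. f' (h *\<^sub>R v))) (at x)"
    using has_derivative_compose[OF cd fd] by (simp add: comp_def)
  moreover have "f' v = v$1 * f' (axis 1 1) + v$2 * f' (axis 2 1)"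
    by (subst vec2_decomp) (simp add: linear_add[OF l] linear_scale[OF l])
  moreover have "(\<lambda>h. f' (h *\<^sub>R v)) = (\<lambda>h. f' v * h)"
    using linear_scale[OF l] by (auto simp: mult.commute)
  ultimately show ?thesis
    unfolding has_field_derivative_def by (simp add: pderiv2_frechet[OF fd])
qed

definition mk :: "real \<Rightarrow> real \<Rightarrow> real^2" where
  "mk a b = (\<chi> i. if i = 1 then a else b)"

lemma mk_1[simp]: "mk a b $ 1 = a" and mk_2[simp]: "mk a b $ 2 = b"
  by (simp_all add: mk_def)

lemma vec2_eqI: "(x::real^2) $ 1 = y $ 1 \<Longrightarrow> x $ 2 = y $ 2 \<Longrightarrow> x = y"
  by (simp add: vec_eq_iff forall_2)

lemma norm2_sq: "(norm (v::real^2))\<^sup>2 = (v$1)\<^sup>2 + (v$2)\<^sup>2"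
  unfolding power2_norm_eq_inner by (simp add: inner_vec_def sum_2 power2_eq_square)

lemma inner2: "(v::real^2) \<bullet> w = v$1 * w$1 + v$2 * w$2"
  by (simp add: inner_vec_def sum_2)

lemma nu_pm:
  fixes v g :: "real^2"
  assumes "norm v = 1" "norm g = 1" "v \<bullet> g = 0"
  shows "v = rot g \<or> v = - rot g"
proof -
  define a b x y where "a = v$1" "b = v$2" "x = g$1" "y = g$2"
  have n1: "a^2 + b^2 = 1" using norm2_sq[of v] assms(1) a_b_x_y_def by simp
  have n2: "x^2 + y^2 = 1" using norm2_sq[of g] assms(2) a_b_x_y_def by simp
  have o: "a*x + b*y = 0" using assms(3) a_b_x_y_def by (simp add: inner2)
  define l where "l = b*x - a*y"
  have ha: "a = - l * y"
  proof -
    have "a = a*(x^2+y^2)" using n2 by simp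
    also have "\<dots> = - l * y + x*(a*x+b*y)" unfolding l_def by (simp add: algebra_simps power2_eq_square)
    finally show ?thesis using o by simp
  qed
  have hb: "b = l * x"
  proof -
    have "b = b*(x^2+y^2)" using n2 by simp
    also have "\<dots> = l * x + y*(a*x+b*y)" unfolding l_def by (simp add: algebra_simps power2_eq_square)
    finally show ?thesis using o by simp
  qed
  have "l^2 = 1"
  proof -
    have "1 = a^2 + b^2" using n1 by simp
    also have "\<dots> = l^2 * (x^2+y^2)" using ha hb by (simp add: algebra_simps power2_eq_square)
    finally show ?thesis using n2 by simp
  qed
  hence "l = 1 \<or> l = -1" by (simp add: power2_eq_1_iff)
  thus ?thesis
  proof
    assume "l = 1" thus ?thesis using ha hb a_b_x_y_def by (auto intro!: vec2_eqI)
  next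
    assume "l = -1" thus ?thesis using ha hb a_b_x_y_def by (auto intro!: vec2_eqI)
  qed
qed

lemma periodic_int:
  fixes f :: "real \<Rightarrow> 'a"
  assumes "\<And>x. f (x + L) = f x"
  shows "f (x + real_of_int k * L) = f x"
proof -
  have nat: "f (y + real n * L) = f y" for y n
  proof (induction n)
    case (Suc n)
    have "f (y + real (Suc n) * L) = f ((y + real n * L) + L)" by (simp add: algebra_simps)
    also have "\<dots> = f y" using assms Suc by simp
    finally show ?case .
  qed simp
  show ?thesis
  proof (cases "k \<ge> 0")
    case True
    then obtain n where "k = int n" by (metis nonneg_eq_int)
    thus ?thesis using nat by simp
  next
    case False
    then obtain n where kn: "k = - int n" by (intro that[of "nat (-k)"]) simp
    have "f (x + real_of_int k * L) = f (x + real_of_int k * L + real n * L)" using nat by simp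
    also have "\<dots> = f x" using kn by simp
    finally show ?thesis .
  qed
qed

lemma nu_local:
  fixes \<gamma> \<nu> g1 :: "real \<Rightarrow> real^2" and L M0 \<theta> :: real
  assumes L: "L > 0"
    and per: "\<And>x. \<gamma> (x + L) = \<gamma> x"
    and simple: "inj_on \<gamma> {0..<L}"
    and g1per: "\<And>x. g1 (x + L) = g1 x"
    and nun: "\<And>x. norm (\<nu> x) = 1"
    and g1n: "\<And>x. norm (g1 x) = 1"
    and nuo: "\<And>x. \<nu> x \<bullet> g1 x = 0"
    and nu_outer: "\<And>\<theta>. \<exists>\<delta>>0. \<forall>s. 0 < s \<and> s < \<delta> \<longrightarrow>
                      \<gamma> \<theta> + s *\<^sub>R \<nu> \<theta> \<in> outside (\<gamma> ` {0..L})"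
    and M0: "M0 > 0"
    and fermi_inj: "inj_on (\<lambda>(t, \<theta>). \<gamma> \<theta> + t *\<^sub>R \<nu> \<theta>) ({-M0<..<M0} \<times> {0..<L})"
    and c\<gamma>: "continuous_on UNIV \<gamma>" and cg: "continuous_on UNIV g1"
  shows "\<exists>\<eta>>0. \<exists>c. (c = 1 \<or> c = -1) \<and> (\<forall>\<phi>. \<bar>\<phi> - \<theta>\<bar> < \<eta> \<longrightarrow> \<nu> \<phi> = c *\<^sub>R rot (g1 \<phi>))"
proof -
  define n where "n \<phi> = rot (g1 \<phi>)" for \<phi>
  define F where "F t \<phi> = \<gamma> \<phi> + t *\<^sub>R n \<phi>" for t \<phi>
  have nsgn: "\<nu> \<phi> = n \<phi> \<or> \<nu> \<phi> = - n \<phi>" for \<phi>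
    unfolding n_def by (rule nu_pm[OF nun g1n nuo])
  have nn: "n \<phi> \<noteq> 0" for \<phi>
    using nsgn[of \<phi>] nun[of \<phi>] by auto
  have nsgn2: "\<exists>a. (a = 1 \<or> a = -1) \<and> n \<phi> = a *\<^sub>R \<nu> \<phi>" for \<phi>
    using nsgn[of \<phi>] by (metis scaleR_minus1_left scaleR_one minus_minus)
  have Finj0: "t = t' \<and> r = r'" if "\<bar>t\<bar> < M0" "\<bar>t'\<bar> < M0" "r \<in> {0..<L}" "r' \<in> {0..<L}"
      "F t r = F t' r'" for t t' r r'
  proof -
    obtain a where a: "a = 1 \<or> a = -1" "n r = a *\<^sub>R \<nu> r" using nsgn2 by blast
    obtain b where b: "b = 1 \<or> b = -1" "n r' = b *\<^sub>R \<nu> r'" using nsgn2 by blast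
    have "(\<lambda>(t, \<theta>). \<gamma> \<theta> + t *\<^sub>R \<nu> \<theta>) (t*a, r) = (\<lambda>(t, \<theta>). \<gamma> \<theta> + t *\<^sub>R \<nu> \<theta>) (t'*b, r')"
      using that(5) a b by (simp add: F_def)
    moreover have "(t*a, r) \<in> {-M0<..<M0} \<times> {0..<L}" "(t'*b, r') \<in> {-M0<..<M0} \<times> {0..<L}"
      using that a b by auto
    ultimately have "(t*a, r) = (t'*b, r')" using inj_onD[OF fermi_inj] by blast
    hence rr: "r = r'" by simp
    hence "t *\<^sub>R n r = t' *\<^sub>R n r" using that(5) by (simp add: F_def)
    hence "(t - t') *\<^sub>R n r = 0" by (simp add: algebra_simps)
    hence "t = t'" using nn[of r] by simp
    thus ?thesis using rr by simp
  qed
  have \<gamma>per: "\<gamma> (x + real_of_int k * L) = \<gamma> x" for x k by (rule periodic_int[where f=\<gamma>, OF per])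
  have gper: "g1 (x + real_of_int k * L) = g1 x" for x k by (rule periodic_int[where f=g1, OF g1per])
  have Fper: "F t (\<phi> + real_of_int k * L) = F t \<phi>" for t \<phi> k
    by (simp add: F_def n_def \<gamma>per gper)
  define rm where "rm \<phi> = \<phi> - real_of_int \<lfloor>\<phi>/L\<rfloor> * L" for \<phi>
  have rm: "rm \<phi> \<in> {0..<L}" for \<phi>
    using floor_divide_lower[OF L, of \<phi>] floor_divide_upper[OF L, of \<phi>]
    by (auto simp: rm_def algebra_simps)
  have rm2: "\<phi> = rm \<phi> + real_of_int \<lfloor>\<phi>/L\<rfloor> * L" for \<phi> by (simp add: rm_def)
  have Frm: "F t \<phi> = F t (rm \<phi>)" for t \<phi>
    by (subst rm2[of \<phi>]) (rule Fper)
  have FinjW: "t = t' \<and> \<phi> = \<phi>'" if "\<bar>t\<bar> < M0" "\<bar>t'\<bar> < M0" "\<bar>\<phi> - \<theta>\<bar> < L/4" "\<bar>\<phi>' - \<theta>\<bar> < L/4"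
     "F t \<phi> = F t' \<phi>'" for t t' \<phi> \<phi>'
  proof -
    have "F t (rm \<phi>) = F t' (rm \<phi>')" using that(5) Frm by metis
    from Finj0[OF that(1,2) rm rm this] have tt: "t = t'" and rr: "rm \<phi> = rm \<phi>'" by auto
    define d where "d = \<lfloor>\<phi>/L\<rfloor> - \<lfloor>\<phi>'/L\<rfloor>"
    have "\<phi> - \<phi>' = real_of_int d * L" using rm2[of \<phi>] rm2[of \<phi>'] rr by (simp add: d_def algebra_simps)
    moreover have "\<bar>\<phi> - \<phi>'\<bar> < L" using that(3,4) L by linarith
    ultimately have "\<bar>real_of_int d\<bar> * L < 1 * L" using L by (simp add: abs_mult)
    hence "\<bar>real_of_int d\<bar> < 1" using L by (meson mult_less_cancel_right_pos)
    hence "d = 0" by linarith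
    thus ?thesis using tt \<open>\<phi> - \<phi>' = real_of_int d * L\<close> by simp
  qed
  define C where "C = \<gamma> ` {0..L}"
  have \<gamma>C: "\<gamma> \<phi> \<in> C" for \<phi>
  proof -
    have "\<gamma> \<phi> = \<gamma> (rm \<phi>)" by (subst rm2[of \<phi>]) (rule \<gamma>per)
    thus ?thesis using rm[of \<phi>] unfolding C_def by auto
  qed
  have FnotC: "t = 0" if h: "\<bar>t\<bar> < M0" "F t \<phi> \<in> C" for t \<phi>
  proof -
    obtain \<psi> where \<psi>: "\<psi> \<in> {0..L}" "F t \<phi> = \<gamma> \<psi>" using h(2) unfolding C_def by auto
    define \<psi>' where "\<psi>' = (if \<psi> = L then 0 else \<psi>)"
    have "\<psi>' \<in> {0..<L}" using \<psi>(1) L by (auto simp: \<psi>'_def)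
    moreover have "\<gamma> \<psi>' = \<gamma> \<psi>" using per[of 0] by (auto simp: \<psi>'_def)
    ultimately have "F t (rm \<phi>) = F 0 \<psi>'" using \<psi>(2) Frm by (simp add: F_def)
    from Finj0[OF h(1) _ rm \<open>\<psi>' \<in> {0..<L}\<close> this] M0 show ?thesis by simp
  qed
  define cp where "cp = (\<lambda>x. \<gamma> (L * x))"
  have pim: "path_image cp = C"
  proof -
    have "path_image cp = \<gamma> ` ((*) L ` {0..1})" unfolding path_image_def cp_def by (simp add: image_image)
    also have "(*) L ` {0..1} = {0..L}" using image_mult_atLeastAtMost[OF L, of 0 1] by simp
    finally show ?thesis unfolding C_def .
  qed
  have "path cp" unfolding path_def cp_def
    by (rule continuous_on_compose2[OF c\<gamma>]) (auto intro!: continuous_intros)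
  moreover have "loop_free cp"
    unfolding loop_free_def
  proof (intro ballI impI)
    fix x y :: real assume xy: "x \<in> {0..1}" "y \<in> {0..1}" and e: "cp x = cp y"
    have g0: "\<gamma> L = \<gamma> 0" using per[of 0] by simp
    have inj: "a = b" if "a \<in> {0..<L}" "b \<in> {0..<L}" "\<gamma> a = \<gamma> b" for a b
      using inj_onD[OF simple that(3) that(1,2)] .
    show "x = y \<or> x = 0 \<and> y = 1 \<or> x = 1 \<and> y = 0"
    proof (cases "x < 1")
      case x1: True
      show ?thesis
      proof (cases "y < 1")
        case True
        have "L * x = L * y" using inj[of "L*x" "L*y"] e xy x1 True L by (auto simp: cp_def)
        thus ?thesis using L by simp
      next
        case False
        hence "y = 1" using xy by auto
        hence "\<gamma> (L*x) = \<gamma> 0" using e g0 by (simp add: cp_def)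
        hence "L * x = 0" using inj[of "L*x" 0] xy x1 L by auto
        thus ?thesis using L \<open>y = 1\<close> by simp
      qed
    next
      case False
      hence x1: "x = 1" using xy by auto
      show ?thesis
      proof (cases "y < 1")
        case True
        hence "\<gamma> (L*y) = \<gamma> 0" using e g0 x1 by (simp add: cp_def)
        hence "L * y = 0" using inj[of "L*y" 0] xy True L by auto
        thus ?thesis using L x1 by simp
      next
        case False
        thus ?thesis using xy x1 by auto
      qed
    qed
  qed
  ultimately have sp: "simple_path cp" by (simp add: simple_path_def)
  have lp: "pathfinish cp = pathstart cp" using per[of 0] by (simp add: pathfinish_def pathstart_def cp_def)
  have hom: "C homeomorphic sphere (0::real^2) 1"
  proof -
    have "path_image cp homeomorphic sphere (0::complex) 1"
      by (rule homeomorphic_simple_path_image_circle[OF sp lp]) simp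
    moreover have "sphere (0::complex) 1 homeomorphic sphere (0::real^2) 1"
      by (rule homeomorphic_spheres_gen) simp_all
    ultimately show ?thesis using pim homeomorphic_trans by metis
  qed
  have nc: "\<not> connected (- C)" using Jordan_Brouwer_separation[OF hom] by simp
  have front: "frontier T = C" if "T \<in> components (- C)" for T
    using Jordan_Brouwer_frontier[OF hom that] by simp
  have bC: "bounded C" unfolding C_def
    by (rule compact_imp_bounded, rule compact_continuous_image)
       (auto intro: continuous_on_subset[OF c\<gamma>])
  have co: "connected (outside C)" using connected_outside[OF bC] by simp
  obtain x where x: "x \<in> - C" "x \<notin> outside C"
  proof -
    have "\<not> (- C \<subseteq> outside C)"
    proof
      assume "- C \<subseteq> outside C"
      moreover have "outside C \<subseteq> - C" using outside_no_overlap[of C] by blast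
      ultimately have "- C = outside C" by blast
      thus False using nc co by simp
    qed
    thus ?thesis using that by blast
  qed
  define T where "T = connected_component_set (- C) x"
  have "T \<in> components (- C)" unfolding components_def T_def using x(1) by blast
  hence fT: "frontier T = C" by (rule front)
  have Tsub: "T \<subseteq> - C" unfolding T_def by (rule connected_component_subset)
  have Tout: "y \<notin> outside C" if "y \<in> T" for y
  proof
    assume "y \<in> outside C"
    moreover have "connected_component (- C) y x"
      using that unfolding T_def by (simp add: connected_component_sym)
    ultimately have "x \<in> outside C" using outside_same_component by blast
    thus False using x(2) by simp
  qed
  have pcl: "\<gamma> \<theta> \<in> closure T" using fT \<gamma>C[of \<theta>] unfolding frontier_def by blast
  define r0 where "r0 = M0/2"
  define \<eta> where "\<eta> = L/4"
  have r0: "0 < r0" "r0 < M0" using M0 by (auto simp: r0_def)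
  have \<eta>: "0 < \<eta>" using L by (simp add: \<eta>_def)
  define B where "B = box (mk (-r0) (\<theta>-\<eta>)) (mk r0 (\<theta>+\<eta>))"
  define Fv where "Fv y = F (y$1) (y$2)" for y :: "real^2"
  have Bmem: "y \<in> B \<longleftrightarrow> \<bar>y$1\<bar> < r0 \<and> \<bar>y$2 - \<theta>\<bar> < \<eta>" for y
    unfolding B_def interval_cart by (auto simp: forall_2 abs_less_iff)
  have cF: "continuous_on UNIV Fv"
  proof -
    have c1: "continuous_on UNIV (\<lambda>y::real^2. \<gamma> (y$2))"
      by (rule continuous_on_compose2[OF c\<gamma>]) (auto intro!: continuous_intros)
    have c2: "continuous_on UNIV (\<lambda>y::real^2. g1 (y$2))"
      by (rule continuous_on_compose2[OF cg]) (auto intro!: continuous_intros)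
    have c3: "continuous_on UNIV (\<lambda>y::real^2. rot (g1 (y$2)))"
      by (rule continuous_on_compose2[OF linear_continuous_on[OF bl_rot] c2]) auto
    show ?thesis unfolding Fv_def F_def n_def
      by (intro continuous_intros c1 c3)
  qed
  have injF: "inj_on Fv B"
  proof (rule inj_onI)
    fix y y' assume "y \<in> B" "y' \<in> B" "Fv y = Fv y'"
    hence "y$1 = y'$1 \<and> y$2 = y'$2"
      using FinjW[of "y$1" "y'$1" "y$2" "y'$2"] r0 by (auto simp: Bmem Fv_def \<eta>_def)
    thus "y = y'" by (auto intro: vec2_eqI)
  qed
  have oF: "open (Fv ` B)"
    by (rule invariance_of_domain[OF continuous_on_subset[OF cF] _ injF]) (auto simp: B_def)
  have pF: "\<gamma> \<theta> \<in> Fv ` B"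
  proof
    show "mk 0 \<theta> \<in> B" using r0 \<eta> by (simp add: Bmem)
    show "\<gamma> \<theta> = Fv (mk 0 \<theta>)" by (simp add: Fv_def F_def)
  qed
  have "Fv ` B \<inter> closure T \<noteq> {}" using pF pcl by blast
  hence "Fv ` B \<inter> T \<noteq> {}" using open_Int_closure_eq_empty[OF oF] by blast
  then obtain y0 where y0: "y0 \<in> B" "Fv y0 \<in> T" by blast
  have y0ne: "y0$1 \<noteq> 0"
  proof
    assume "y0$1 = 0"
    hence "Fv y0 \<in> C" using \<gamma>C by (simp add: Fv_def F_def)
    thus False using y0(2) Tsub by blast
  qed
  define \<sigma> where "\<sigma> = (if y0$1 > 0 then 1 else -1 :: real)"
  have \<sigma>: "\<sigma> = 1 \<or> \<sigma> = -1" "\<sigma> * y0$1 > 0" using y0ne by (auto simp: \<sigma>_def)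
  define B' where "B' = B \<inter> {y. 0 < (\<sigma> *\<^sub>R axis 1 1) \<bullet> y}"
  have B'mem: "y \<in> B' \<longleftrightarrow> y \<in> B \<and> 0 < \<sigma> * y$1" for y
    by (simp add: B'_def inner_axis')
  have cB': "connected B'" unfolding B'_def
    by (rule convex_connected, rule convex_Int) (simp add: B_def, rule convex_halfspace_gt)
  define S where "S = Fv ` B'"
  have cS: "connected S" unfolding S_def
    by (rule connected_continuous_image[OF continuous_on_subset[OF cF] cB']) simp
  have SC: "S \<subseteq> - C"
  proof
    fix z assume "z \<in> S"
    then obtain y where y: "y \<in> B'" "z = Fv y" by (auto simp: S_def)
    have "y$1 \<noteq> 0" using y(1) by (auto simp: B'mem)
    moreover have "\<bar>y$1\<bar> < M0" using y(1) r0 by (auto simp: B'mem Bmem)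
    ultimately show "z \<in> - C" using FnotC y(2) by (auto simp: Fv_def)
  qed
  have qS: "Fv y0 \<in> S" using y0 \<sigma> by (auto simp: S_def B'mem)
  have claim: "\<nu> \<phi> = (-\<sigma>) *\<^sub>R n \<phi>" if "\<bar>\<phi> - \<theta>\<bar> < \<eta>" for \<phi>
  proof (rule ccontr)
    assume ne: "\<nu> \<phi> \<noteq> (-\<sigma>) *\<^sub>R n \<phi>"
    have ns: "\<nu> \<phi> = \<sigma> *\<^sub>R n \<phi>" using nsgn[of \<phi>] \<sigma>(1) ne by auto
    obtain \<delta> where \<delta>: "\<delta> > 0" "\<forall>s. 0 < s \<and> s < \<delta> \<longrightarrow> \<gamma> \<phi> + s *\<^sub>R \<nu> \<phi> \<in> outside C"
      using nu_outer[of \<phi>] unfolding C_def by blast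
    define s where "s = min (\<delta>/2) (r0/2)"
    have s: "0 < s" "s < \<delta>" "s < r0" using \<delta>(1) r0 by (auto simp: s_def)
    have zo: "\<gamma> \<phi> + s *\<^sub>R \<nu> \<phi> \<in> outside C" using \<delta>(2) s by blast
    have "\<gamma> \<phi> + s *\<^sub>R \<nu> \<phi> = Fv (mk (\<sigma> * s) \<phi>)"
      using ns by (simp add: Fv_def F_def mult.commute)
    moreover have "mk (\<sigma> * s) \<phi> \<in> B'"
      using \<sigma>(1) s that by (auto simp: B'mem Bmem)
    ultimately have zS: "\<gamma> \<phi> + s *\<^sub>R \<nu> \<phi> \<in> S" by (simp add: S_def)
    have "connected_component (- C) (\<gamma> \<phi> + s *\<^sub>R \<nu> \<phi>) (Fv y0)"
      unfolding connected_component_def using cS SC zS qS by blast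
    hence "Fv y0 \<in> outside C" using outside_same_component zo by blast
    thus False using Tout y0(2) by blast
  qed
  show ?thesis
    using \<eta> \<sigma>(1) claim unfolding n_def by (intro exI[of _ \<eta>] conjI exI[of _ "-\<sigma>"]) auto
qed

lemma ftc_real:
  fixes f f' :: "real \<Rightarrow> real"
  assumes "a \<le> b" "\<And>x. x \<in> {a..b} \<Longrightarrow> (f has_real_derivative f' x) (at x)"
  shows "(f' has_integral f b - f a) {a..b}"
  by (rule fundamental_theorem_of_calculus[OF assms(1)])
     (simp add: has_real_derivative_iff_has_vector_derivative[symmetric] assms(2) has_field_derivative_at_within)

lemma alg_core:
  fixes U P Q Wf Wd Df ut Wt D Dd :: "real \<Rightarrow> real" and k e M :: real
  assumes M: "0 < M"
    and cU: "continuous_on {-M..M} U" and cP: "continuous_on {-M..M} P"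
    and cW: "continuous_on {-M..M} Wf" and cWd: "continuous_on {-M..M} Wd"
    and cD: "continuous_on {-M..M} Df"
    and dU: "\<And>t. t \<in> {-M..M} \<Longrightarrow> (U has_real_derivative P t) (at t)"
    and dP: "\<And>t. t \<in> {-M..M} \<Longrightarrow> (P has_real_derivative Q t) (at t)"
    and dW: "\<And>t. t \<in> {-M..M} \<Longrightarrow> (Wf has_real_derivative Wd t) (at t)"
    and key: "\<And>t. t \<in> {-M..M} \<Longrightarrow>
       e * ((1 + k*t) * Q t + k * P t + Df t) = (1 + k*t) * ((1 + e * Wf t) * U t - U t ^ 3)"
    and ut: "\<And>t. t \<in> {-M..M} \<Longrightarrow> ut t = P t"
    and Wt: "\<And>t. t \<in> {-M..M} \<Longrightarrow> Wt t = Wd t"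
    and DD: "\<And>t. t \<in> {-M..M} \<Longrightarrow> D t = Df t"
    and Dd: "\<And>t. t \<in> {-M..M} \<Longrightarrow> Dd t = k * U t + (1 + k*t) * P t"
  shows "e * integral {-M..M} (\<lambda>t. (1 + k*t) * (ut t)\<^sup>2)
       + integral {-M..M} (\<lambda>t. (1 + k*t) * (1 + e * Wf t) * (U t)\<^sup>2)
       - integral {-M..M} (\<lambda>t. (1 + k*t) * (U t) ^ 4)
     = e * integral {-M..M} (\<lambda>t. U t * D t)
       + e * evalb (\<lambda>t. (1 + k*t) * U t * ut t) (-M) M
   \<and>
     e * integral {-M..M} (\<lambda>t. (1 + k*t)\<^sup>2 * Wt t * (U t)\<^sup>2)
       + 2 * k * integral {-M..M} (\<lambda>t. (1 + k*t) * (1 + e * Wf t) * (U t)\<^sup>2)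
       - k * integral {-M..M} (\<lambda>t. (1 + k*t) * (U t) ^ 4)
     = - 2 * e * integral {-M..M} (\<lambda>t. (1 + k*t) * ut t * D t)
       - e * evalb (\<lambda>t. ((1 + k*t) * ut t)\<^sup>2) (-M) M
       + evalb (\<lambda>t. (1 + k*t)\<^sup>2 * (1 + e * Wf t) * (U t)\<^sup>2) (-M) M
       - 1/2 * evalb (\<lambda>t. (1 + k*t)\<^sup>2 * \<bar>U t\<bar> ^ 4) (-M) M
   \<and>
     2 * e * k * integral {-M..M} (\<lambda>t. (1 + k*t) * (ut t)\<^sup>2)
       - e * integral {-M..M} (\<lambda>t. (1 + k*t)\<^sup>2 * Wt t * (U t)\<^sup>2)
       - k * integral {-M..M} (\<lambda>t. (1 + k*t) * (U t) ^ 4)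
     = 2 * e * integral {-M..M} (\<lambda>t. Dd t * D t)
       + 2 * e * k * evalb (\<lambda>t. (1 + k*t) * U t * ut t) (-M) M
       + e * evalb (\<lambda>t. ((1 + k*t) * ut t)\<^sup>2) (-M) M
       - evalb (\<lambda>t. (1 + k*t)\<^sup>2 * (1 + e * Wf t) * (U t)\<^sup>2) (-M) M
       + 1/2 * evalb (\<lambda>t. (1 + k*t)\<^sup>2 * \<bar>U t\<bar> ^ 4) (-M) M"
proof -
  define I where "I = {-M..M}"
  have MI: "M \<in> I" "-M \<in> I" using M by (auto simp: I_def)
  have int: "f integrable_on I" if "continuous_on I f" for f :: "real \<Rightarrow> real"
    using that unfolding I_def by (rule integrable_continuous_interval)
  note cI = cU[folded I_def] cP[folded I_def] cW[folded I_def] cWd[folded I_def] cD[folded I_def]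
  define A1 where "A1 = integral I (\<lambda>t. (1 + k*t) * (P t)\<^sup>2)"
  define A2 where "A2 = integral I (\<lambda>t. (1 + k*t) * (1 + e * Wf t) * (U t)\<^sup>2)"
  define A3 where "A3 = integral I (\<lambda>t. (1 + k*t) * (U t) ^ 4)"
  define A4 where "A4 = integral I (\<lambda>t. U t * Df t)"
  define A5 where "A5 = integral I (\<lambda>t. (1 + k*t)\<^sup>2 * Wd t * (U t)\<^sup>2)"
  define A6 where "A6 = integral I (\<lambda>t. (1 + k*t) * P t * Df t)"
  have i1: "((\<lambda>t. (1 + k*t) * (P t)\<^sup>2) has_integral A1) I"
    unfolding A1_def by (rule integrable_integral, rule int) (intro continuous_intros cI)
  have i2: "((\<lambda>t. (1 + k*t) * (1 + e * Wf t) * (U t)\<^sup>2) has_integral A2) I"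
    unfolding A2_def by (rule integrable_integral, rule int) (intro continuous_intros cI)
  have i3: "((\<lambda>t. (1 + k*t) * (U t) ^ 4) has_integral A3) I"
    unfolding A3_def by (rule integrable_integral, rule int) (intro continuous_intros cI)
  have i4: "((\<lambda>t. U t * Df t) has_integral A4) I"
    unfolding A4_def by (rule integrable_integral, rule int) (intro continuous_intros cI)
  have i5: "((\<lambda>t. (1 + k*t)\<^sup>2 * Wd t * (U t)\<^sup>2) has_integral A5) I"
    unfolding A5_def by (rule integrable_integral, rule int) (intro continuous_intros cI)
  have i6: "((\<lambda>t. (1 + k*t) * P t * Df t) has_integral A6) I"
    unfolding A6_def by (rule integrable_integral, rule int) (intro continuous_intros cI)
  define h1 where "h1 t = (1 + k*t) * U t * P t" for t
  have dh1: "(h1 has_real_derivative (k * U t * P t + (1 + k*t) * P t * P t + (1 + k*t) * U t * Q t)) (at t)"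
    if "t \<in> I" for t
    unfolding h1_def using dU[OF that[unfolded I_def]] dP[OF that[unfolded I_def]]
    by (auto intro!: derivative_eq_intros simp: algebra_simps)
  have "((\<lambda>t. k * U t * P t + (1 + k*t) * P t * P t + (1 + k*t) * U t * Q t) has_integral h1 M - h1 (-M)) I"
    unfolding I_def by (rule ftc_real) (use M dh1 in \<open>auto simp: I_def\<close>)
  hence "((\<lambda>t. e * (k * U t * P t + (1 + k*t) * P t * P t + (1 + k*t) * U t * Q t)) has_integral e * (h1 M - h1 (-M))) I"
    by (rule has_integral_mult_right)
  moreover have "e * (k * U t * P t + (1 + k*t) * P t * P t + (1 + k*t) * U t * Q t)
      = e * ((1 + k*t) * (P t)\<^sup>2) + (1 + k*t) * (1 + e * Wf t) * (U t)\<^sup>2 - (1 + k*t) * (U t) ^ 4 - e * (U t * Df t)"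
    if "t \<in> I" for t
  proof -
    have "e * (k * U t * P t + (1 + k*t) * P t * P t + (1 + k*t) * U t * Q t)
       = e * ((1 + k*t) * (P t)\<^sup>2) + U t * (e * ((1 + k*t) * Q t + k * P t + Df t)) - e * (U t * Df t)"
      by algebra
    also have "\<dots> = e * ((1 + k*t) * (P t)\<^sup>2) + (1 + k*t) * (1 + e * Wf t) * (U t)\<^sup>2 - (1 + k*t) * (U t) ^ 4 - e * (U t * Df t)"
      using key[OF that[unfolded I_def]] by algebra
    finally show ?thesis .
  qed
  ultimately have j1: "((\<lambda>t. e * ((1 + k*t) * (P t)\<^sup>2) + (1 + k*t) * (1 + e * Wf t) * (U t)\<^sup>2 - (1 + k*t) * (U t) ^ 4 - e * (U t * Df t)) has_integral e * (h1 M - h1 (-M))) I"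
    using has_integral_eq by (metis (no_types, lifting))
  have "((\<lambda>t. e * ((1 + k*t) * (P t)\<^sup>2) + (1 + k*t) * (1 + e * Wf t) * (U t)\<^sup>2 - (1 + k*t) * (U t) ^ 4 - e * (U t * Df t)) has_integral e * A1 + A2 - A3 - e * A4) I"
    by (intro has_integral_diff has_integral_add has_integral_mult_right i1 i2 i3 i4)
  from has_integral_unique[OF j1 this] have E1: "e * A1 + A2 - A3 - e * A4 = e * (h1 M - h1 (-M))" by simp
  define h2 where "h2 t = - e * ((1 + k*t) * P t) * ((1 + k*t) * P t) + (1 + k*t) * (1 + k*t) * (1 + e * Wf t) * U t * U t
      - 1/2 * ((1 + k*t) * (1 + k*t) * U t * U t * U t * U t)" for t
  have dh2: "(h2 has_real_derivative (2 * e * ((1 + k*t) * P t * Df t) + 2 * k * ((1 + k*t) * (1 + e * Wf t) * (U t)\<^sup>2)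
       + e * ((1 + k*t)\<^sup>2 * Wd t * (U t)\<^sup>2) - k * ((1 + k*t) * (U t) ^ 4))) (at t)"
    if "t \<in> I" for t
  proof -
    define X where "X = - e * (2 * (1 + k*t) * P t * (k * P t + (1 + k*t) * Q t))
       + (2 * k * (1 + k*t) * (1 + e * Wf t) * U t * U t + (1 + k*t) * (1 + k*t) * (e * Wd t) * U t * U t
          + (1 + k*t) * (1 + k*t) * (1 + e * Wf t) * 2 * U t * P t)
       - 1/2 * (2 * k * (1 + k*t) * U t * U t * U t * U t + (1 + k*t) * (1 + k*t) * 4 * U t * U t * U t * P t)"
    have "(h2 has_real_derivative X) (at t)"
      unfolding h2_def X_def using dU[OF that[unfolded I_def]] dP[OF that[unfolded I_def]] dW[OF that[unfolded I_def]]
      by (auto intro!: derivative_eq_intros simp: algebra_simps)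
    moreover have "X = (2 * e * ((1 + k*t) * P t * Df t) + 2 * k * ((1 + k*t) * (1 + e * Wf t) * (U t)\<^sup>2)
       + e * ((1 + k*t)\<^sup>2 * Wd t * (U t)\<^sup>2) - k * ((1 + k*t) * (U t) ^ 4))
       - 2 * (1 + k*t) * P t * (e * ((1 + k*t) * Q t + k * P t + Df t) - (1 + k*t) * ((1 + e * Wf t) * U t - U t ^ 3))"
      unfolding X_def by algebra
    ultimately show ?thesis using key[OF that[unfolded I_def]] by simp
  qed
  have j2: "((\<lambda>t. 2 * e * ((1 + k*t) * P t * Df t) + 2 * k * ((1 + k*t) * (1 + e * Wf t) * (U t)\<^sup>2)
       + e * ((1 + k*t)\<^sup>2 * Wd t * (U t)\<^sup>2) - k * ((1 + k*t) * (U t) ^ 4)) has_integral h2 M - h2 (-M)) I"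
    unfolding I_def by (rule ftc_real) (use M dh2 in \<open>auto simp: I_def\<close>)
  have "((\<lambda>t. 2 * e * ((1 + k*t) * P t * Df t) + 2 * k * ((1 + k*t) * (1 + e * Wf t) * (U t)\<^sup>2)
       + e * ((1 + k*t)\<^sup>2 * Wd t * (U t)\<^sup>2) - k * ((1 + k*t) * (U t) ^ 4)) has_integral
       2 * e * A6 + 2 * k * A2 + e * A5 - k * A3) I"
    by (intro has_integral_diff has_integral_add has_integral_mult_right i2 i3 i5 i6)
  from has_integral_unique[OF j2 this] have E2: "2 * e * A6 + 2 * k * A2 + e * A5 - k * A3 = h2 M - h2 (-M)" by simp
  have r1: "integral {-M..M} (\<lambda>t. (1 + k*t) * (ut t)\<^sup>2) = A1"
    unfolding A1_def I_def by (rule integral_cong) (simp add: ut)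
  have r2: "integral {-M..M} (\<lambda>t. U t * D t) = A4"
    unfolding A4_def I_def by (rule integral_cong) (simp add: DD)
  have r3: "integral {-M..M} (\<lambda>t. (1 + k*t)\<^sup>2 * Wt t * (U t)\<^sup>2) = A5"
    unfolding A5_def I_def by (rule integral_cong) (simp add: Wt)
  have r4: "integral {-M..M} (\<lambda>t. (1 + k*t) * ut t * D t) = A6"
    unfolding A6_def I_def by (rule integral_cong) (simp add: ut DD)
  have r5: "integral {-M..M} (\<lambda>t. Dd t * D t) = k * A4 + A6"
  proof -
    have "integral {-M..M} (\<lambda>t. Dd t * D t) = integral I (\<lambda>t. k * (U t * Df t) + (1 + k*t) * P t * Df t)"
      unfolding I_def by (rule integral_cong) (simp add: Dd DD algebra_simps)
    also have "\<dots> = k * A4 + A6"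
      using has_integral_add[OF has_integral_mult_right[OF i4, of k] i6] by (rule integral_unique)
    finally show ?thesis .
  qed
  have r6: "integral {-M..M} (\<lambda>t. (1 + k*t) * (1 + e * Wf t) * (U t)\<^sup>2) = A2" by (simp add: A2_def I_def)
  have r7: "integral {-M..M} (\<lambda>t. (1 + k*t) * (U t) ^ 4) = A3" by (simp add: A3_def I_def)
  have ev1: "evalb (\<lambda>t. (1 + k*t) * U t * ut t) (-M) M = h1 M - h1 (-M)"
    using MI by (simp add: evalb_def h1_def ut I_def)
  have ev2: "- e * evalb (\<lambda>t. ((1 + k*t) * ut t)\<^sup>2) (-M) M
       + evalb (\<lambda>t. (1 + k*t)\<^sup>2 * (1 + e * Wf t) * (U t)\<^sup>2) (-M) M
       - 1/2 * evalb (\<lambda>t. (1 + k*t)\<^sup>2 * \<bar>U t\<bar> ^ 4) (-M) M = h2 M - h2 (-M)"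
  proof -
    have a4: "\<bar>x\<bar> ^ 4 = x ^ 4" for x :: real by (simp add: power_even_abs)
    show ?thesis
      unfolding evalb_def h2_def a4 ut[OF MI(1)[unfolded I_def]] ut[OF MI(2)[unfolded I_def]]
      by algebra
  qed
  define X where "X = evalb (\<lambda>t. ((1 + k*t) * ut t)\<^sup>2) (-M) M"
  define Y where "Y = evalb (\<lambda>t. (1 + k*t)\<^sup>2 * (1 + e * Wf t) * (U t)\<^sup>2) (-M) M"
  define Z where "Z = evalb (\<lambda>t. (1 + k*t)\<^sup>2 * \<bar>U t\<bar> ^ 4) (-M) M"
  note ev2' = ev2[folded X_def Y_def Z_def]
  show ?thesis
    unfolding r1 r2 r3 r4 r5 r6 r7 ev1 X_def[symmetric] Y_def[symmetric] Z_def[symmetric]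
  proof (intro conjI)
    show "e * A1 + A2 - A3 = e * A4 + e * (h1 M - h1 (- M))" using E1 by algebra
    show "e * A5 + 2 * k * A2 - k * A3 = - 2 * e * A6 - e * X + Y - 1 / 2 * Z" using E2 ev2' by algebra
    show "2 * e * k * A1 - e * A5 - k * A3 = 2 * e * (k * A4 + A6) + 2 * e * k * (h1 M - h1 (- M)) + e * X - Y + 1 / 2 * Z"
      using E1 E2 ev2' by algebra
  qed
qed

theorem lemma4p1:
  fixes \<gamma> \<nu> :: "real \<Rightarrow> real^2" and \<kappa> :: "real \<Rightarrow> real"
    and L M\<^sub>0 \<epsilon> :: real and u W :: "real^2 \<Rightarrow> real"
  assumes l_pos: "L > 0"
    and smooth: "smooth_curve \<gamma>"
    and periodic: "\<And>\<theta>. \<gamma> (\<theta> + L) = \<gamma> \<theta>"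
    and simple: "inj_on \<gamma> {0..<L}"
    and arclength: "\<And>\<theta>. norm (vector_derivative \<gamma> (at \<theta>)) = 1"
    and nu_unit: "\<And>\<theta>. norm (\<nu> \<theta>) = 1"
    and nu_normal: "\<And>\<theta>. \<nu> \<theta> \<bullet> vector_derivative \<gamma> (at \<theta>) = 0"
    and nu_outer: "\<And>\<theta>. \<exists>\<delta>>0. \<forall>s. 0 < s \<and> s < \<delta> \<longrightarrow>
                      \<gamma> \<theta> + s *\<^sub>R \<nu> \<theta> \<in> outside (\<gamma> ` {0..L})"
    and curvature: "\<And>\<theta>. vector_derivative (\<lambda>s. vector_derivative \<gamma> (at s)) (at \<theta>)
                        = - (\<kappa> \<theta>) *\<^sub>R \<nu> \<theta>"
    and M0_pos: "M\<^sub>0 > 0"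
    and fermi_inj: "inj_on (\<lambda>(t, \<theta>). \<gamma> \<theta> + t *\<^sub>R \<nu> \<theta>) ({-M\<^sub>0<..<M\<^sub>0} \<times> {0..<L})"
    and fermi_jac: "\<And>t \<theta>. \<bar>t\<bar> < M\<^sub>0 \<Longrightarrow> 1 + \<kappa> \<theta> * t \<noteq> 0"
    and u_C2: "C2_R2 u"
    and W_C1: "C1_R2 W"
    and pde: "\<And>y. - \<epsilon>\<^sup>2 * laplacian2 u y + (1 + \<epsilon>\<^sup>2 * W y) * u y - \<bar>u y\<bar>\<^sup>2 * u y = 0"
  shows "\<forall>M \<theta>. 0 < M \<and> M < M\<^sub>0 \<and> \<theta> \<in> {0..<L} \<longrightarrow>
    (let U = (\<lambda>t. fermi \<gamma> \<nu> u t \<theta>);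
         Wf = (\<lambda>t. fermi \<gamma> \<nu> W t \<theta>);
         a = (\<lambda>t. 1 + \<kappa> \<theta> * t);
         ut = (\<lambda>t. deriv U t);
         Wt = (\<lambda>t. deriv Wf t);
         D = (\<lambda>t. deriv (\<lambda>\<phi>. deriv (\<lambda>\<psi>. fermi \<gamma> \<nu> u t \<psi>) \<phi> / (1 + \<kappa> \<phi> * t)) \<theta>)
     in
     \<epsilon>\<^sup>2 * integral {-M..M} (\<lambda>t. a t * (ut t)\<^sup>2)
       + integral {-M..M} (\<lambda>t. a t * (1 + \<epsilon>\<^sup>2 * Wf t) * (U t)\<^sup>2)
       - integral {-M..M} (\<lambda>t. a t * (U t) ^ 4)
     = \<epsilon>\<^sup>2 * integral {-M..M} (\<lambda>t. U t * D t)
       + \<epsilon>\<^sup>2 * evalb (\<lambda>t. a t * U t * ut t) (-M) M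
   \<and>
     \<epsilon>\<^sup>2 * integral {-M..M} (\<lambda>t. (a t)\<^sup>2 * Wt t * (U t)\<^sup>2)
       + 2 * \<kappa> \<theta> * integral {-M..M} (\<lambda>t. a t * (1 + \<epsilon>\<^sup>2 * Wf t) * (U t)\<^sup>2)
       - \<kappa> \<theta> * integral {-M..M} (\<lambda>t. a t * (U t) ^ 4)
     = - 2 * \<epsilon>\<^sup>2 * integral {-M..M} (\<lambda>t. a t * ut t * D t)
       - \<epsilon>\<^sup>2 * evalb (\<lambda>t. (a t * ut t)\<^sup>2) (-M) M
       + evalb (\<lambda>t. (a t)\<^sup>2 * (1 + \<epsilon>\<^sup>2 * Wf t) * (U t)\<^sup>2) (-M) M
       - 1/2 * evalb (\<lambda>t. (a t)\<^sup>2 * \<bar>U t\<bar> ^ 4) (-M) M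
   \<and>
     2 * \<epsilon>\<^sup>2 * \<kappa> \<theta> * integral {-M..M} (\<lambda>t. a t * (ut t)\<^sup>2)
       - \<epsilon>\<^sup>2 * integral {-M..M} (\<lambda>t. (a t)\<^sup>2 * Wt t * (U t)\<^sup>2)
       - \<kappa> \<theta> * integral {-M..M} (\<lambda>t. a t * (U t) ^ 4)
     = 2 * \<epsilon>\<^sup>2 * integral {-M..M} (\<lambda>t. deriv (\<lambda>s. a s * U s) t * D t)
       + 2 * \<epsilon>\<^sup>2 * \<kappa> \<theta> * evalb (\<lambda>t. a t * U t * ut t) (-M) M
       + \<epsilon>\<^sup>2 * evalb (\<lambda>t. (a t * ut t)\<^sup>2) (-M) M
       - evalb (\<lambda>t. (a t)\<^sup>2 * (1 + \<epsilon>\<^sup>2 * Wf t) * (U t)\<^sup>2) (-M) M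
       + 1/2 * evalb (\<lambda>t. (a t)\<^sup>2 * \<bar>U t\<bar> ^ 4) (-M) M)"
  apply (intro allI impI)
  subgoal premises M\<theta> for M \<theta>
proof -
  from M\<theta> have M: "0 < M" "M < M\<^sub>0" by auto
  obtain Dc where Dc: "Dc 0 = \<gamma>" "\<And>n x. (Dc n has_vector_derivative Dc (Suc n) x) (at x)"
    using smooth unfolding smooth_curve_def by blast
  define g1 where "g1 = Dc 1"
  define g2 where "g2 = Dc 2"
  have d\<gamma>: "(\<gamma> has_vector_derivative g1 x) (at x)" for x
    using Dc(2)[of 0 x] Dc(1) by (simp add: g1_def)
  have dg1: "(g1 has_vector_derivative g2 x) (at x)" for x
    using Dc(2)[of 1 x] by (simp add: g1_def g2_def numeral_2_eq_2)
  have vd: "vector_derivative \<gamma> (at x) = g1 x" for x by (rule vector_derivative_at[OF d\<gamma>])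
  have vdf: "(\<lambda>s. vector_derivative \<gamma> (at s)) = g1" by (rule ext) (rule vd)
  have curv: "g2 x = - \<kappa> x *\<^sub>R \<nu> x" for x
    using curvature[of x] unfolding vdf vector_derivative_at[OF dg1] .
  have g1n: "norm (g1 x) = 1" for x using arclength[of x] by (simp add: vd)
  have nuo: "\<nu> x \<bullet> g1 x = 0" for x using nu_normal[of x] by (simp add: vd)
  have g1per: "g1 (x + L) = g1 x" for x
  proof -
    have "((\<lambda>x. x + L) has_vector_derivative 1) (at x)" by (auto intro!: derivative_eq_intros)
    from vector_diff_chain_at[OF this d\<gamma>[of "x + L"]]
    have "((\<gamma> \<circ> (\<lambda>x. x + L)) has_vector_derivative g1 (x + L)) (at x)" by simp
    moreover have "\<gamma> \<circ> (\<lambda>x. x + L) = \<gamma>" using periodic by (auto simp: comp_def)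
    ultimately have "(\<gamma> has_vector_derivative g1 (x + L)) (at x)" by simp
    thus ?thesis using vector_derivative_unique_at[OF d\<gamma>[of x]] by metis
  qed
  have c\<gamma>: "continuous_on UNIV \<gamma>"
    by (rule continuous_at_imp_continuous_on)
       (use d\<gamma> in \<open>auto simp: has_vector_derivative_def intro: has_derivative_continuous\<close>)
  have cg: "continuous_on UNIV g1"
    by (rule continuous_at_imp_continuous_on)
       (use dg1 in \<open>auto simp: has_vector_derivative_def intro: has_derivative_continuous\<close>)
  obtain \<eta> c where \<eta>: "\<eta> > 0" and c: "c = 1 \<or> c = -1"
    and loc: "\<And>\<phi>. \<bar>\<phi> - \<theta>\<bar> < \<eta> \<Longrightarrow> \<nu> \<phi> = c *\<^sub>R rot (g1 \<phi>)"
    using nu_local[OF l_pos periodic simple g1per nu_unit g1n nuo nu_outer M0_pos fermi_inj c\<gamma> cg, of \<theta>]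
    by blast
  have cc: "c * c = 1" using c by auto
  have ax: "axis 1 1 \<in> (Basis :: (real^2) set)" "axis 2 1 \<in> (Basis :: (real^2) set)"
    by (simp_all add: Basis_vec2)
  define G where "G i = pderiv2 (axis i 1) u" for i :: 2
  define H where "H i j = pderiv2 (axis j 1) (G i)" for i j :: 2
  define GW where "GW i = pderiv2 (axis i 1) W" for i :: 2
  have ud: "u differentiable (at y)" for y using u_C2 by (simp add: C2_R2_def C1_R2_def)
  have Wdiff: "W differentiable (at y)" for y using W_C1 by (simp add: C1_R2_def)
  have Gd: "G i differentiable (at y)" if "i = 1 \<or> i = 2" for i y
    using u_C2 ax that by (auto simp: C2_R2_def C1_R2_def G_def)
  have Gc: "continuous_on UNIV (G i)" if "i = 1 \<or> i = 2" for i
    using u_C2 ax that by (auto simp: C2_R2_def C1_R2_def G_def)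
  have Hc: "continuous_on UNIV (H i j)" if "i = 1 \<or> i = 2" "j = 1 \<or> j = 2" for i j
    using u_C2 ax that by (auto simp: C2_R2_def C1_R2_def G_def H_def)
  have GWc: "continuous_on UNIV (GW i)" if "i = 1 \<or> i = 2" for i
    using W_C1 ax that by (auto simp: C1_R2_def GW_def)
  have uc: "continuous_on UNIV u"
    by (rule continuous_at_imp_continuous_on)
       (use ud in \<open>auto intro: differentiable_imp_continuous_within\<close>)
  have Wc: "continuous_on UNIV W"
    by (rule continuous_at_imp_continuous_on)
       (use Wdiff in \<open>auto intro: differentiable_imp_continuous_within\<close>)
  have lap: "laplacian2 u y = H 1 1 y + H 2 2 y" for y
    by (simp add: laplacian2_eq H_def G_def)
  define N where "N = \<nu> \<theta>"
  define tg where "tg = g1 \<theta>"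
  define k where "k = \<kappa> \<theta>"
  define cl where "cl t = \<gamma> \<theta> + t *\<^sub>R N" for t
  have dcl: "(cl has_vector_derivative N) (at t)" for t
    unfolding cl_def by (auto intro!: derivative_eq_intros)
  have ccl: "continuous_on UNIV cl" unfolding cl_def by (intro continuous_intros)
  have ccomp: "continuous_on {-M..M} (\<lambda>t. f (cl t))" if "continuous_on UNIV f" for f :: "real^2 \<Rightarrow> real"
    by (rule continuous_on_compose2[OF that continuous_on_subset[OF ccl]]) auto
  define P where "P t = N$1 * G 1 (cl t) + N$2 * G 2 (cl t)" for t
  define Q where "Q t = N$1 * (N$1 * H 1 1 (cl t) + N$2 * H 1 2 (cl t)) + N$2 * (N$1 * H 2 1 (cl t) + N$2 * H 2 2 (cl t))" for t
  define Wd where "Wd t = N$1 * GW 1 (cl t) + N$2 * GW 2 (cl t)" for t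
  define Df where "Df t = - k * P t + (1 + k * t) * (tg$1 * (tg$1 * H 1 1 (cl t) + tg$2 * H 1 2 (cl t))
                     + tg$2 * (tg$1 * H 2 1 (cl t) + tg$2 * H 2 2 (cl t)))" for t
  have Uf: "fermi \<gamma> \<nu> u t \<theta> = u (cl t)" for t by (simp add: fermi_def cl_def N_def)
  have Wff: "fermi \<gamma> \<nu> W t \<theta> = W (cl t)" for t by (simp add: fermi_def cl_def N_def)
  have dU: "((\<lambda>t. fermi \<gamma> \<nu> u t \<theta>) has_real_derivative P t) (at t)" for t
    unfolding Uf P_def G_def by (rule pd_chain[OF ud dcl])
  have dG: "((\<lambda>s. G i (cl s)) has_real_derivative N$1 * H i 1 (cl t) + N$2 * H i 2 (cl t)) (at t)"
    if "i = 1 \<or> i = 2" for i t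
    unfolding H_def by (rule pd_chain[OF Gd[OF that] dcl])
  have dP: "(P has_real_derivative Q t) (at t)" for t
  proof -
    have "((\<lambda>t. N$1 * G 1 (cl t) + N$2 * G 2 (cl t)) has_real_derivative
          N$1 * (N$1 * H 1 1 (cl t) + N$2 * H 1 2 (cl t)) + N$2 * (N$1 * H 2 1 (cl t) + N$2 * H 2 2 (cl t))) (at t)"
      by (rule DERIV_add[OF DERIV_cmult[OF dG] DERIV_cmult[OF dG]]) simp_all
    thus ?thesis unfolding P_def[abs_def] Q_def .
  qed
  have dW: "((\<lambda>t. fermi \<gamma> \<nu> W t \<theta>) has_real_derivative Wd t) (at t)" for t
    unfolding Wff Wd_def GW_def by (rule pd_chain[OF Wdiff dcl])
  have kk: "\<kappa> \<theta> = k" by (simp add: k_def)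
  have \<theta>in: "\<theta> \<in> ball \<theta> \<eta>" using \<eta> by simp
  have dnu: "(\<nu> has_vector_derivative \<kappa> \<phi> *\<^sub>R g1 \<phi>) (at \<phi>)" if "\<phi> \<in> ball \<theta> \<eta>" for \<phi>
  proof -
    have "((\<lambda>x. c *\<^sub>R rot (g1 x)) has_vector_derivative c *\<^sub>R rot (g2 \<phi>)) (at \<phi>)"
      by (rule bounded_linear.has_vector_derivative[OF bounded_linear_scaleR_right
            bounded_linear.has_vector_derivative[OF bl_rot dg1]])
    moreover have "c *\<^sub>R rot (g2 \<phi>) = \<kappa> \<phi> *\<^sub>R g1 \<phi>"
    proof -
      have "\<bar>\<phi> - \<theta>\<bar> < \<eta>" using that by (simp add: dist_real_def abs_minus_commute)
      hence "g2 \<phi> = (- \<kappa> \<phi> * c) *\<^sub>R rot (g1 \<phi>)" using curv[of \<phi>] loc by simp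
      hence "c *\<^sub>R rot (g2 \<phi>) = (c * (- \<kappa> \<phi> * c)) *\<^sub>R (- g1 \<phi>)" by (simp add: rot_scale rot_rot vec_eq_iff forall_2)
      also have "c * (- \<kappa> \<phi> * c) = - \<kappa> \<phi>" using cc by (simp add: algebra_simps)
      finally show ?thesis by simp
    qed
    ultimately have "((\<lambda>x. c *\<^sub>R rot (g1 x)) has_vector_derivative \<kappa> \<phi> *\<^sub>R g1 \<phi>) (at \<phi>)" by simp
    moreover have "c *\<^sub>R rot (g1 y) = \<nu> y" if "y \<in> ball \<theta> \<eta>" for y
      using loc[of y] that by (simp add: dist_real_def abs_minus_commute)
    ultimately show ?thesis
      using has_vector_derivative_transform_within_open[OF _ open_ball that] by blast
  qed
  have Dq: "deriv (\<lambda>\<phi>. deriv (\<lambda>\<psi>. fermi \<gamma> \<nu> u t \<psi>) \<phi> / (1 + \<kappa> \<phi> * t)) \<theta> = Df t" if tM: "\<bar>t\<bar> < M\<^sub>0" for t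
  proof -
    define \<Phi> where "\<Phi> \<psi> = \<gamma> \<psi> + t *\<^sub>R \<nu> \<psi>" for \<psi>
    define qf where "qf \<phi> = (g1 \<phi>)$1 * G 1 (\<Phi> \<phi>) + (g1 \<phi>)$2 * G 2 (\<Phi> \<phi>)" for \<phi>
    have d\<Phi>: "(\<Phi> has_vector_derivative (1 + \<kappa> \<phi> * t) *\<^sub>R g1 \<phi>) (at \<phi>)" if "\<phi> \<in> ball \<theta> \<eta>" for \<phi>
    proof -
      have "(\<Phi> has_vector_derivative g1 \<phi> + t *\<^sub>R (\<kappa> \<phi> *\<^sub>R g1 \<phi>)) (at \<phi>)"
        unfolding \<Phi>_def
        by (rule has_vector_derivative_add[OF d\<gamma> bounded_linear.has_vector_derivative[OF bounded_linear_scaleR_right dnu[OF that]]])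
      moreover have "g1 \<phi> + t *\<^sub>R (\<kappa> \<phi> *\<^sub>R g1 \<phi>) = (1 + \<kappa> \<phi> * t) *\<^sub>R g1 \<phi>"
        by (simp add: algebra_simps)
      ultimately show ?thesis by simp
    qed
    have ff: "(\<lambda>\<psi>. fermi \<gamma> \<nu> u t \<psi>) = (\<lambda>\<psi>. u (\<Phi> \<psi>))" by (simp add: fermi_def \<Phi>_def)
    have dq1: "deriv (\<lambda>\<psi>. fermi \<gamma> \<nu> u t \<psi>) \<phi> = (1 + \<kappa> \<phi> * t) * qf \<phi>" if "\<phi> \<in> ball \<theta> \<eta>" for \<phi>
    proof -
      have "((\<lambda>\<psi>. u (\<Phi> \<psi>)) has_real_derivative ((1 + \<kappa> \<phi> * t) *\<^sub>R g1 \<phi>)$1 * G 1 (\<Phi> \<phi>)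
               + ((1 + \<kappa> \<phi> * t) *\<^sub>R g1 \<phi>)$2 * G 2 (\<Phi> \<phi>)) (at \<phi>)"
        unfolding G_def by (rule pd_chain[OF ud d\<Phi>[OF that]])
      hence "deriv (\<lambda>\<psi>. u (\<Phi> \<psi>)) \<phi> = ((1 + \<kappa> \<phi> * t) *\<^sub>R g1 \<phi>)$1 * G 1 (\<Phi> \<phi>)
               + ((1 + \<kappa> \<phi> * t) *\<^sub>R g1 \<phi>)$2 * G 2 (\<Phi> \<phi>)" by (rule DERIV_imp_deriv)
      thus ?thesis unfolding ff qf_def by (simp add: algebra_simps)
    qed
    have eqq: "qf \<phi> = deriv (\<lambda>\<psi>. fermi \<gamma> \<nu> u t \<psi>) \<phi> / (1 + \<kappa> \<phi> * t)" if "\<phi> \<in> ball \<theta> \<eta>" for \<phi>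
      using dq1[OF that] fermi_jac[OF tM, of \<phi>] by simp
    have dqf: "(qf has_real_derivative Df t) (at \<theta>)"
    proof -
      have dc: "((\<lambda>\<phi>. g1 \<phi> $ i) has_real_derivative g2 \<theta> $ i) (at \<theta>)" for i
        using bounded_linear.has_vector_derivative[OF bounded_linear_vec_nth dg1[of \<theta>]]
        by (simp add: has_real_derivative_iff_has_vector_derivative)
      have dG\<Phi>: "((\<lambda>\<phi>. G i (\<Phi> \<phi>)) has_real_derivative ((1 + \<kappa> \<theta> * t) *\<^sub>R g1 \<theta>)$1 * H i 1 (\<Phi> \<theta>)
                 + ((1 + \<kappa> \<theta> * t) *\<^sub>R g1 \<theta>)$2 * H i 2 (\<Phi> \<theta>)) (at \<theta>)" if "i = 1 \<or> i = 2" for i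
        unfolding H_def by (rule pd_chain[OF Gd[OF that] d\<Phi>[OF \<theta>in]])
      have "(qf has_real_derivative
          (g2 \<theta> $ 1 * G 1 (\<Phi> \<theta>) + (((1 + \<kappa> \<theta> * t) *\<^sub>R g1 \<theta>)$1 * H 1 1 (\<Phi> \<theta>)
                 + ((1 + \<kappa> \<theta> * t) *\<^sub>R g1 \<theta>)$2 * H 1 2 (\<Phi> \<theta>)) * g1 \<theta> $ 1)
        + (g2 \<theta> $ 2 * G 2 (\<Phi> \<theta>) + (((1 + \<kappa> \<theta> * t) *\<^sub>R g1 \<theta>)$1 * H 2 1 (\<Phi> \<theta>)
                 + ((1 + \<kappa> \<theta> * t) *\<^sub>R g1 \<theta>)$2 * H 2 2 (\<Phi> \<theta>)) * g1 \<theta> $ 2)) (at \<theta>)"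
        unfolding qf_def[abs_def]
        by (rule DERIV_add[OF DERIV_mult[OF dc dG\<Phi>] DERIV_mult[OF dc dG\<Phi>]]) simp_all
      moreover have "\<Phi> \<theta> = cl t" by (simp add: \<Phi>_def cl_def N_def)
      moreover have "g2 \<theta> = - k *\<^sub>R N" by (simp add: curv N_def k_def)
      ultimately show ?thesis
        by (simp add: Df_def P_def tg_def k_def algebra_simps)
    qed
    have "((\<lambda>\<phi>. deriv (\<lambda>\<psi>. fermi \<gamma> \<nu> u t \<psi>) \<phi> / (1 + \<kappa> \<phi> * t)) has_real_derivative Df t) (at \<theta>)"
      by (rule has_field_derivative_transform_within_open[OF dqf open_ball \<theta>in]) (rule eqq)
    thus ?thesis by (rule DERIV_imp_deriv)
  qed
  have Nr: "N = c *\<^sub>R rot tg" using loc[of \<theta>] \<eta> by (simp add: N_def tg_def)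
  have hN1: "N$1 = - c * tg$2" and hN2: "N$2 = c * tg$1" using Nr by simp_all
  have nt: "tg$1 * tg$1 + tg$2 * tg$2 = 1" using norm2_sq[of tg] g1n[of \<theta>] by (simp add: tg_def power2_eq_square)
  have o1: "N$1 * N$1 + tg$1 * tg$1 = 1" using hN1 cc nt by algebra
  have o2: "N$2 * N$2 + tg$2 * tg$2 = 1" using hN2 cc nt by algebra
  have o3: "N$1 * N$2 + tg$1 * tg$2 = 0" using hN1 hN2 cc by algebra
  have key: "\<epsilon>\<^sup>2 * ((1 + k*t) * Q t + k * P t + Df t)
       = (1 + k*t) * ((1 + \<epsilon>\<^sup>2 * fermi \<gamma> \<nu> W t \<theta>) * fermi \<gamma> \<nu> u t \<theta> - fermi \<gamma> \<nu> u t \<theta> ^ 3)"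
    if "t \<in> {-M..M}" for t
  proof -
    have comb: "(1 + k*t) * Q t + k * P t + Df t = (1 + k*t) * (H 1 1 (cl t) + H 2 2 (cl t))"
      unfolding Q_def Df_def using o1 o2 o3 by algebra
    have pd: "\<epsilon>\<^sup>2 * (H 1 1 (cl t) + H 2 2 (cl t)) = (1 + \<epsilon>\<^sup>2 * W (cl t)) * u (cl t) - u (cl t) ^ 3"
      using pde[of "cl t"] unfolding lap power2_abs by algebra
    show ?thesis unfolding Uf Wff comb using pd by algebra
  qed
  have cG: "continuous_on {-M..M} (\<lambda>t. G i (cl t))" if "i = 1 \<or> i = 2" for i
    by (rule ccomp[OF Gc[OF that]])
  have cH: "continuous_on {-M..M} (\<lambda>t. H i j (cl t))" if "i = 1 \<or> i = 2" "j = 1 \<or> j = 2" for i j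
    by (rule ccomp[OF Hc[OF that]])
  have cGW: "continuous_on {-M..M} (\<lambda>t. GW i (cl t))" if "i = 1 \<or> i = 2" for i
    by (rule ccomp[OF GWc[OF that]])
  have cU: "continuous_on {-M..M} (\<lambda>t. fermi \<gamma> \<nu> u t \<theta>)" unfolding Uf by (rule ccomp[OF uc])
  have cW: "continuous_on {-M..M} (\<lambda>t. fermi \<gamma> \<nu> W t \<theta>)" unfolding Wff by (rule ccomp[OF Wc])
  have cP: "continuous_on {-M..M} P" unfolding P_def[abs_def]
    by (intro continuous_intros cG) simp_all
  have cWd: "continuous_on {-M..M} Wd" unfolding Wd_def[abs_def]
    by (intro continuous_intros cGW) simp_all
  have cDf: "continuous_on {-M..M} Df" unfolding Df_def[abs_def]
    by (intro continuous_intros cH cP) simp_all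
  have ut: "deriv (\<lambda>t. fermi \<gamma> \<nu> u t \<theta>) t = P t" if "t \<in> {-M..M}" for t
    by (rule DERIV_imp_deriv[OF dU])
  have Wt: "deriv (\<lambda>t. fermi \<gamma> \<nu> W t \<theta>) t = Wd t" if "t \<in> {-M..M}" for t
    by (rule DERIV_imp_deriv[OF dW])
  have DD: "deriv (\<lambda>\<phi>. deriv (\<lambda>\<psi>. fermi \<gamma> \<nu> u t \<psi>) \<phi> / (1 + \<kappa> \<phi> * t)) \<theta> = Df t" if "t \<in> {-M..M}" for t
    using that M by (intro Dq) auto
  have Dd: "deriv (\<lambda>s. (1 + k * s) * fermi \<gamma> \<nu> u s \<theta>) t = k * fermi \<gamma> \<nu> u t \<theta> + (1 + k * t) * P t"
    if "t \<in> {-M..M}" for t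
    by (rule DERIV_imp_deriv) (use dU[of t] in \<open>auto intro!: derivative_eq_intros\<close>)
  show ?thesis unfolding Let_def kk
    by (rule alg_core[where U = "\<lambda>t. fermi \<gamma> \<nu> u t \<theta>" and P = P and Q = Q and Wf = "\<lambda>t. fermi \<gamma> \<nu> W t \<theta>"
          and Wd = Wd and Df = Df and k = k and e = "\<epsilon>\<^sup>2",
          OF M(1) cU cP cW cWd cDf dU dP dW key ut Wt DD Dd])
qed
  done

end
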